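(* Let $G(\pi_i,\pi_i')=\frac12\|\pi_i-\pi_i'\|^2$ and $\mu>0$. Assume $\sqrt{\sum_{i=1}^N\|\nabla_{\pi_i}v_i(\pi)\|^2}\le\zeta$ for all $\pi\in\mathcal X$. Then for any $\sigma,\sigma'\in\mathcal X$, $$\|\pi^{\mu,\sigma}-\sigma\|^2\le\|\sigma-\sigma'\|^2+\frac{2\zeta}{\mu}\|\pi^{\mu,\sigma'}-\sigma\|.$$ (In the paper this is applied with $\sigma=\sigma^k$, $\sigma'=\sigma^{k-1}$.)
   Context: Game. Let $N\ge1$. For each $i\in[N]$, $\mathcal X_i\subseteq\mathbb R^{d_i}$ is a nonempty compact convex set, and $\mathcal X=\prod_i\mathcal X_i$. Each $v_i:\mathcal X\to\mathbb R$ is differentiable, with block gradient $\nabla_{\pi_i}v_i$. The norm is Euclidean, with $\|\pi\|^2=\sum_i\|\pi_i\|^2$. The game is monotone: $\sum_i\langle\nabla_{\pi_i}v_i(\pi)-\nabla_{\pi_i}v_i(\pi'),\pi_i-\pi_i'\rangle\le0$ for all $\pi,\pi'$. Perturbed equilibrium. For $\mu>0$ and $\sigma\in\mathcal X$, $\pi^{\mu,\sigma}$ is the (unique) profile with $\pi_i^{\mu,\sigma}\in\arg\max_{\pi_i\in\mathcal X_i}\{v_i(\pi_i,\pi^{\mu,\sigma}_{-i})-\mu G(\pi_i,\sigma_i)\}$ for all $i$. *)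

theory Defs
  imports "HOL-Analysis.Analysis"
begin

text \<open>A strategy profile is a vector in real^'c; every coordinate c belongs to
  the player owner c :: 'p.  The block of player i is the projection onto the
  coordinates owned by i (other coordinates set to 0).  This realises
  R^{d_1} x ... x R^{d_N} with the Euclidean norm.\<close>

definition block :: "('c::finite \<Rightarrow> 'p) \<Rightarrow> 'p \<Rightarrow> real^'c \<Rightarrow> real^'c" where
  "block owner i x = (\<chi> c. if owner c = i then x $ c else 0)"

definition block_space :: "('c::finite \<Rightarrow> 'p) \<Rightarrow> 'p \<Rightarrow> (real^'c) set" where
  "block_space owner i = {x. \<forall>c. owner c \<noteq> i \<longrightarrow> x $ c = 0}"

definition upd_block :: "('c::finite \<Rightarrow> 'p) \<Rightarrow> 'p \<Rightarrow> real^'c \<Rightarrow> real^'c \<Rightarrow> real^'c" where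
  "upd_block owner i q x = q - block owner i q + x"

definition prod_set :: "('c::finite \<Rightarrow> 'p) \<Rightarrow> ('p \<Rightarrow> (real^'c) set) \<Rightarrow> (real^'c) set" where
  "prod_set owner Xs = {q. \<forall>i. block owner i q \<in> Xs i}"

definition Gsq :: "real^'c::finite \<Rightarrow> real^'c \<Rightarrow> real" where
  "Gsq x y = (1/2) * (norm (x - y))^2"

definition perturbed_eq ::
  "('c::finite \<Rightarrow> 'p) \<Rightarrow> ('p \<Rightarrow> (real^'c) set) \<Rightarrow> ('p \<Rightarrow> real^'c \<Rightarrow> real)
    \<Rightarrow> real \<Rightarrow> real^'c \<Rightarrow> real^'c \<Rightarrow> bool" where
  "perturbed_eq owner Xs v mu sg q \<longleftrightarrow>
     q \<in> prod_set owner Xs \<and>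
     (\<forall>i. \<forall>x\<in>Xs i.
        v i (upd_block owner i q x) - mu * Gsq x (block owner i sg)
          \<le> v i q - mu * Gsq (block owner i q) (block owner i sg))"

end

theory Submission imports Defs begin
lemma one_sided_max:
  fixes h :: "real \<Rightarrow> real"
  assumes d: "(h has_real_derivative D) (at 0 within {0..1})"
    and le: "\<And>t. t \<in> {0..1} \<Longrightarrow> h t \<le> h 0"
  shows "D \<le> 0"
proof -
  have L: "((\<lambda>y. (h y - h 0) / (y - 0)) \<longlongrightarrow> D) (at 0 within {0..1})"
    using d by (simp add: has_field_derivative_iff)
  have E: "eventually (\<lambda>y. (h y - h 0) / (y - 0) \<le> 0) (at 0 within {0..1})"
    unfolding eventually_at_filter
    by (rule always_eventually) (auto intro!: divide_nonpos_pos le)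
  have NB: "at (0::real) within {0..1} \<noteq> bot"
    by (simp add: at_within_Icc_at_right)
  show ?thesis using tendsto_upperbound[OF L E NB] .
qed

lemma block_diff: "block owner i (a - b) = block owner i a - block owner i b"
  by (simp add: block_def vec_eq_iff)
lemma block_add: "block owner i (a + b) = block owner i a + block owner i b"
  by (simp add: block_def vec_eq_iff)
lemma block_idem: "block owner i (block owner i a) = block owner i a"
  by (simp add: block_def vec_eq_iff)
lemma block_space_id: "x \<in> block_space owner i \<Longrightarrow> block owner i x = x"
  by (simp add: block_def block_space_def vec_eq_iff)
lemma inner_block: "inner (block owner i a) b = inner a (block owner i b)"
  by (auto simp: block_def inner_vec_def intro!: sum.cong)
lemma sum_inner_block:
  fixes owner :: "'c::finite \<Rightarrow> 'p::finite"
  shows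
  "(\<Sum>i\<in>UNIV. inner (block owner i (a i)) b) = inner (\<chi> c. a (owner c) $ c) b"
proof -
  have "(\<Sum>i\<in>UNIV. inner (block owner i (a i)) b)
      = (\<Sum>i\<in>UNIV. \<Sum>c\<in>UNIV. if owner c = i then a i $ c * b $ c else 0)"
    by (auto simp: block_def inner_vec_def intro!: sum.cong)
  also have "\<dots> = (\<Sum>c\<in>UNIV. \<Sum>i\<in>UNIV. if owner c = i then a i $ c * b $ c else 0)"
    by (rule sum.swap)
  also have "\<dots> = inner (\<chi> c. a (owner c) $ c) b"
    by (simp add: inner_vec_def sum.delta')
  finally show ?thesis .
qed

lemma foc:
  fixes owner :: "'c::finite \<Rightarrow> 'p"
  assumes vd: "(v i has_derivative (\<lambda>h. gv \<bullet> h)) (at p)"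
    and cvx: "convex (Xs i)"
    and pe: "perturbed_eq owner Xs v mu sg p"
    and y: "y \<in> Xs i"
  shows "inner gv (y - block owner i p) \<le> mu * inner (block owner i p - block owner i sg) (y - block owner i p)"
proof -
  define d where "d = y - block owner i p"
  define e where "e = block owner i p - block owner i sg"
  have bp: "block owner i p \<in> Xs i" using pe by (simp add: perturbed_eq_def prod_set_def)
  define h where "h t = v i (p + t *\<^sub>R d) - mu * ((1/2) * (e \<bullet> e + 2 * t * (e \<bullet> d) + t^2 * (d \<bullet> d)))" for t
  have hG: "h t = v i (upd_block owner i p (block owner i p + t *\<^sub>R d)) - mu * Gsq (block owner i p + t *\<^sub>R d) (block owner i sg)" for t
  proof -
    have A: "block owner i p + t *\<^sub>R d - block owner i sg = e + t *\<^sub>R d" by (simp add: e_def)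
    have B: "(norm (e + t *\<^sub>R d))^2 = e \<bullet> e + 2 * t * (e \<bullet> d) + t^2 * (d \<bullet> d)"
      unfolding power2_norm_eq_inner by (simp add: inner_add_left inner_add_right inner_commute power2_eq_square algebra_simps)
    have "(norm (block owner i p + t *\<^sub>R d - block owner i sg))^2 = e \<bullet> e + 2 * t * (e \<bullet> d) + t^2 * (d \<bullet> d)"
      by (simp only: A B)
    thus ?thesis by (simp add: h_def Gsq_def upd_block_def)
  qed
  have le: "h t \<le> h 0" if t: "t \<in> {0..1}" for t
  proof -
    have "block owner i p + t *\<^sub>R d = (1 - t) *\<^sub>R block owner i p + t *\<^sub>R y"
      by (simp add: d_def algebra_simps)
    also have "\<dots> \<in> Xs i" using cvx bp y t by (auto intro: convexD)
    finally have m: "block owner i p + t *\<^sub>R d \<in> Xs i" .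
    have "upd_block owner i p (block owner i p) = p" by (simp add: upd_block_def)
    then show ?thesis using pe m unfolding hG perturbed_eq_def by (metis add.right_neutral scale_zero_left)
  qed
  have dv: "((\<lambda>t. v i (p + t *\<^sub>R d)) has_derivative (\<lambda>t. gv \<bullet> (t *\<^sub>R d))) (at 0 within {0..1})"
    by (rule has_derivative_compose[of "\<lambda>t. p + t *\<^sub>R d", simplified]) (auto intro!: derivative_eq_intros vd)
  have "(\<lambda>t. gv \<bullet> (t *\<^sub>R d)) = (*) (gv \<bullet> d)" by (simp add: fun_eq_iff)
  with dv have dv': "((\<lambda>t. v i (p + t *\<^sub>R d)) has_real_derivative (gv \<bullet> d)) (at 0 within {0..1})"
    by (simp add: has_field_derivative_def)
  have dq: "((\<lambda>t. mu * ((1/2) * (e \<bullet> e + 2 * t * (e \<bullet> d) + t^2 * (d \<bullet> d)))) has_real_derivative mu * (e \<bullet> d)) (at 0 within {0..1})"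
    by (auto intro!: derivative_eq_intros)
  have "(h has_real_derivative (gv \<bullet> d - mu * (e \<bullet> d))) (at 0 within {0..1})"
    unfolding h_def by (rule DERIV_diff[OF dv' dq])
  from one_sided_max[OF this le] show ?thesis by (simp add: d_def e_def)
qed

lemma alg:
  fixes u w e :: "'a::real_inner"
  assumes A: "inner (u - (w + e)) (u - w) \<le> 0"
  shows "(norm u)^2 \<le> (norm e)^2 + 2 * inner (w + e) w"
proof -
  have N: "0 \<le> inner (e + 2 *\<^sub>R w - u) (e + 2 *\<^sub>R w - u)" by simp
  show ?thesis using A N
    unfolding power2_norm_eq_inner
    by (simp add: inner_add_left inner_add_right inner_diff_left inner_diff_right inner_commute algebra_simps)
qed

theorem lemma14:
  fixes owner :: "'c::finite \<Rightarrow> 'p::finite"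
    and Xs :: "'p \<Rightarrow> (real^'c) set"
    and v :: "'p \<Rightarrow> real^'c \<Rightarrow> real"
    and gv :: "'p \<Rightarrow> real^'c \<Rightarrow> real^'c"
    and mu zeta :: real
    and sg sg' p p' :: "real^'c"
  assumes Xs_sub: "\<And>i. Xs i \<subseteq> block_space owner i"
    and Xs_ne: "\<And>i. Xs i \<noteq> {}"
    and Xs_compact: "\<And>i. compact (Xs i)"
    and Xs_convex: "\<And>i. convex (Xs i)"
    and v_diff: "\<And>i q. q \<in> prod_set owner Xs \<Longrightarrow>
                    (v i has_derivative (\<lambda>h. gv i q \<bullet> h)) (at q)"
    and monotone: "\<And>q q'. q \<in> prod_set owner Xs \<Longrightarrow> q' \<in> prod_set owner Xs \<Longrightarrow>
          (\<Sum>i\<in>UNIV. (block owner i (gv i q) - block owner i (gv i q'))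
                        \<bullet> (block owner i q - block owner i q')) \<le> 0"
    and mu_pos: "mu > 0"
    and grad_bound: "\<And>q. q \<in> prod_set owner Xs \<Longrightarrow>
          sqrt (\<Sum>i\<in>UNIV. (norm (block owner i (gv i q)))^2) \<le> zeta"
    and sg: "sg \<in> prod_set owner Xs"
    and sg': "sg' \<in> prod_set owner Xs"
    and p: "perturbed_eq owner Xs v mu sg p"
    and p': "perturbed_eq owner Xs v mu sg' p'"
  shows "(norm (p - sg))^2 \<le> (norm (sg - sg'))^2 + (2 * zeta / mu) * norm (p' - sg)"
proof -
  define Gv where "Gv q = (\<chi> c. gv (owner c) q $ c)" for q
  have pP: "p \<in> prod_set owner Xs" using p by (simp add: perturbed_eq_def)
  have pP': "p' \<in> prod_set owner Xs" using p' by (simp add: perturbed_eq_def)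
  have sumfoc: "inner (Gv P) (y - P) \<le> mu * inner (P - S) (y - P)"
    if pe: "perturbed_eq owner Xs v mu S P" and y: "y \<in> prod_set owner Xs" for P S y
  proof -
    have PP: "P \<in> prod_set owner Xs" using pe by (simp add: perturbed_eq_def)
    have each: "inner (block owner i (gv i P)) (y - P) \<le> mu * inner (block owner i (P - S)) (y - P)" for i
    proof -
      have "block owner i y \<in> Xs i" using y by (simp add: prod_set_def)
      from foc[OF v_diff[OF PP] Xs_convex pe this]
      have "inner (gv i P) (block owner i (y - P)) \<le> mu * inner (block owner i (P - S)) (block owner i (y - P))"
        by (simp add: block_diff)
      thus ?thesis by (simp add: inner_block block_idem)
    qed
    have eta: "(\<chi> c. P $ c - S $ c) = P - S" by (simp add: vec_eq_iff)
    have "inner (Gv P) (y - P) = (\<Sum>i\<in>UNIV. inner (block owner i (gv i P)) (y - P))"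
      by (simp add: sum_inner_block Gv_def)
    also have "\<dots> \<le> (\<Sum>i\<in>UNIV. mu * inner (block owner i (P - S)) (y - P))"
      by (rule sum_mono) (rule each)
    also have "\<dots> = mu * inner (P - S) (y - P)"
      using eta by (simp add: sum_distrib_left[symmetric] sum_inner_block[where a="\<lambda>i. P - S"] vec_lambda_eta)
    finally show ?thesis .
  qed
  have mono: "inner (Gv p - Gv p') (p - p') \<le> 0"
  proof -
    have "inner (Gv p - Gv p') (p - p') = (\<Sum>i\<in>UNIV. inner (block owner i (gv i p - gv i p')) (p - p'))"
    proof -
      have "Gv p - Gv p' = (\<chi> c. (gv (owner c) p - gv (owner c) p') $ c)" by (simp add: Gv_def vec_eq_iff)
      thus ?thesis by (simp only: sum_inner_block)
    qed
    also have "\<dots> = (\<Sum>i\<in>UNIV. (block owner i (gv i p) - block owner i (gv i p'))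
                        \<bullet> (block owner i p - block owner i p'))"
    proof (rule sum.cong[OF refl])
      fix i
      have "inner (block owner i (gv i p - gv i p')) (p - p') = inner (block owner i (gv i p - gv i p')) (block owner i (p - p'))"
        by (metis inner_block block_idem)
      thus "inner (block owner i (gv i p - gv i p')) (p - p') = (block owner i (gv i p) - block owner i (gv i p'))
                        \<bullet> (block owner i p - block owner i p')" by (simp only: block_diff)
    qed
    also have "\<dots> \<le> 0" by (rule monotone[OF pP pP'])
    finally show ?thesis .
  qed
  have gnorm: "norm (Gv p') \<le> zeta"
  proof -
    have "(\<Sum>i\<in>UNIV. (norm (block owner i (gv i p')))^2) = (\<Sum>i\<in>UNIV. inner (block owner i (gv i p')) (Gv p'))"
    proof (rule sum.cong[OF refl])
      fix i
      have "block owner i (gv i p') = block owner i (Gv p')"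
        by (simp add: block_def Gv_def vec_eq_iff)
      thus "(norm (block owner i (gv i p')))^2 = inner (block owner i (gv i p')) (Gv p')"
        by (simp add: power2_norm_eq_inner inner_block block_idem)
    qed
    also have "\<dots> = (norm (Gv p'))^2"
      by (simp add: sum_inner_block power2_norm_eq_inner Gv_def)
    finally show ?thesis using grad_bound[OF pP'] by simp
  qed
  have f1: "inner (Gv p) (p' - p) \<le> mu * inner (p - sg) (p' - p)" by (rule sumfoc[OF p pP'])
  have f2: "inner (Gv p') (p - p') \<le> mu * inner (p' - sg') (p - p')" by (rule sumfoc[OF p' pP])
  have f3: "inner (Gv p') (sg - p') \<le> mu * inner (p' - sg') (sg - p')" by (rule sumfoc[OF p' sg])
  have "mu * inner ((p - sg) - ((p' - sg) + (sg - sg'))) ((p - sg) - (p' - sg)) \<le> 0"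
  proof -
    have "mu * inner ((p - sg) - ((p' - sg) + (sg - sg'))) ((p - sg) - (p' - sg))
        = - (mu * inner (p - sg) (p' - p) + mu * inner (p' - sg') (p - p'))"
      by (simp add: inner_diff_left inner_diff_right algebra_simps)
    also have "\<dots> \<le> - (inner (Gv p) (p' - p) + inner (Gv p') (p - p'))" using f1 f2 by linarith
    also have "\<dots> = inner (Gv p - Gv p') (p - p')"
      by (simp add: inner_diff_left inner_diff_right algebra_simps)
    also have "\<dots> \<le> 0" by (rule mono)
    finally show ?thesis .
  qed
  hence A: "inner ((p - sg) - ((p' - sg) + (sg - sg'))) ((p - sg) - (p' - sg)) \<le> 0"
    using mu_pos by (simp add: mult_le_0_iff)
  have main: "(norm (p - sg))^2 \<le> (norm (sg - sg'))^2 + 2 * inner ((p' - sg) + (sg - sg')) (p' - sg)"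
    by (rule alg[OF A])
  have B: "mu * inner ((p' - sg) + (sg - sg')) (p' - sg) \<le> zeta * norm (p' - sg)"
  proof -
    have "mu * inner ((p' - sg) + (sg - sg')) (p' - sg) = - (mu * inner (p' - sg') (sg - p'))"
      by (simp add: inner_diff_left inner_diff_right algebra_simps)
    also have "\<dots> \<le> inner (Gv p') (p' - sg)"
      using f3 by (simp add: inner_diff_right)
    also have "\<dots> \<le> norm (Gv p') * norm (p' - sg)" by (rule norm_cauchy_schwarz)
    also have "\<dots> \<le> zeta * norm (p' - sg)" by (rule mult_right_mono[OF gnorm]) simp
    finally show ?thesis .
  qed
  have "2 * inner ((p' - sg) + (sg - sg')) (p' - sg) \<le> (2 * zeta / mu) * norm (p' - sg)"
    using B mu_pos by (simp add: field_simps)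
  with main show ?thesis by linarith
qed
end
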